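(* Under the hypotheses of Theorem 3 (A1, A2, A3(S), $\beta\in[0,1)$, $0<\eta<(\frac{H\beta\sigma_{\max}^3}{\sqrt{Nb}\gamma(1-\beta)}+\frac{H\sigma_{\max}^4}{2b\gamma^2})^{-1}$), the SGDM-with-replacement iterates satisfy $\sum_{t=1}^\infty\mathbb{E}\|\nabla\mathcal{L}(w(t))\|^2<\infty$. Consequently, almost surely, $\sum_{t=1}^\infty\|\nabla\mathcal{L}(w(t))\|^2<\infty$ and $\langle w(t),x\rangle\to\infty$ for every $x\in S$.
   Context: Setting. The data are $S=\{x_1,\dots,x_N\}\subset\mathbb{R}^d$, with labels absorbed. $\mathcal{L}(w)=\frac1N\sum_i\ell(\langle w,x_i\rangle)$ and $\mathcal{L}_B(w)=\frac1b\sum_{x\in B}\ell(\langle w,x\rangle)$. $\sigma_{\max}$ is the spectral norm of $(x_1,\dots,x_N)$. A1: there is $w$ with $\langle w,x_i\rangle>0$ for all $i$. A2: $\ell$ is differentiable, $\ell'<0$, $\ell(x),\ell'(x)\to0$ as $x\to\infty$, and $\limsup_{x\to-\infty}\ell'(x)<0$. There are positive $\mu_\pm,x_\pm$ with $-\ell'(x)\le(1+e^{-\mu_+x})e^{-x}$ for $x>x_+$ and $-\ell'(x)\ge(1-e^{-\mu_-x})e^{-x}$ for $x>x_-$. A3(S): $|\ell'(x)-\ell'(y)|\le H|x-y|$ for all $x,y$. Max-margin: $\hat w=\arg\min\{\|w\|^2:\langle w,x_i\rangle\ge1\ \forall i\}$ and $\gamma=1/\|\hat w\|$. SGDM with replacement: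 i.i.d. uniform size-$b$ batches $B(t)\subseteq S$; $m(0)=0$, $m(t)=\beta m(t-1)+(1-\beta)\nabla\mathcal{L}_{B(t)}(w(t))$ and $w(t+1)=w(t)-\eta m(t)$. *)

theory Defs
  imports "HOL-Probability.Probability"
begin

definition full_grad :: "(real \<Rightarrow> real) \<Rightarrow> nat \<Rightarrow> (nat \<Rightarrow> 'a::euclidean_space) \<Rightarrow> 'a \<Rightarrow> 'a" where
  "full_grad dl N x w = (1 / real N) *\<^sub>R (\<Sum>i<N. dl (inner w (x i)) *\<^sub>R x i)"

definition batch_grad :: "(real \<Rightarrow> real) \<Rightarrow> nat \<Rightarrow> (nat \<Rightarrow> 'a::euclidean_space) \<Rightarrow> nat set \<Rightarrow> 'a \<Rightarrow> 'a" where
  "batch_grad dl b x B w = (1 / real b) *\<^sub>R (\<Sum>i\<in>B. dl (inner w (x i)) *\<^sub>R x i)"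

definition batches :: "nat \<Rightarrow> nat \<Rightarrow> nat set set" where
  "batches N b = {B. B \<subseteq> {..<N} \<and> card B = b}"

text \<open>Probability space of i.i.d. uniform size-b batches (the component at time 0 is unused).\<close>
definition batch_space :: "nat \<Rightarrow> nat \<Rightarrow> (nat \<Rightarrow> nat set) measure" where
  "batch_space N b = (\<Pi>\<^sub>M t\<in>(UNIV::nat set). measure_pmf (pmf_of_set (batches N b)))"

text \<open>SGDM state (w(t), m(t)); batch B(t) = \<omega> t for t \<ge> 1.\<close>
primrec sgdm_state :: "(real \<Rightarrow> real) \<Rightarrow> nat \<Rightarrow> (nat \<Rightarrow> 'a::euclidean_space) \<Rightarrow> real \<Rightarrow> real
    \<Rightarrow> 'a \<Rightarrow> (nat \<Rightarrow> nat set) \<Rightarrow> nat \<Rightarrow> 'a \<times> 'a" where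
  "sgdm_state dl b x \<beta> \<eta> w0 \<omega> 0 = (w0, 0)"
| "sgdm_state dl b x \<beta> \<eta> w0 \<omega> (Suc t) =
     (let w' = fst (sgdm_state dl b x \<beta> \<eta> w0 \<omega> t) - \<eta> *\<^sub>R snd (sgdm_state dl b x \<beta> \<eta> w0 \<omega> t)
      in (w', \<beta> *\<^sub>R snd (sgdm_state dl b x \<beta> \<eta> w0 \<omega> t) + (1 - \<beta>) *\<^sub>R batch_grad dl b x (\<omega> (Suc t)) w'))"

definition sgdm_w :: "(real \<Rightarrow> real) \<Rightarrow> nat \<Rightarrow> (nat \<Rightarrow> 'a::euclidean_space) \<Rightarrow> real \<Rightarrow> real
    \<Rightarrow> 'a \<Rightarrow> (nat \<Rightarrow> nat set) \<Rightarrow> nat \<Rightarrow> 'a" where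
  "sgdm_w dl b x \<beta> \<eta> w0 \<omega> t = fst (sgdm_state dl b x \<beta> \<eta> w0 \<omega> t)"

text \<open>Spectral norm of the d x N data matrix (x_1,...,x_N): operator 2-norm.\<close>
definition sigma_max :: "nat \<Rightarrow> (nat \<Rightarrow> 'a::euclidean_space) \<Rightarrow> real" where
  "sigma_max N x = Sup {norm (\<Sum>i<N. v i *\<^sub>R x i) | v. (\<Sum>i<N. (v i)\<^sup>2) \<le> 1}"

definition max_margin :: "nat \<Rightarrow> (nat \<Rightarrow> 'a::euclidean_space) \<Rightarrow> 'a" where
  "max_margin N x = (THE w. (\<forall>i<N. inner w (x i) \<ge> 1) \<and>
      (\<forall>v. (\<forall>i<N. inner v (x i) \<ge> 1) \<longrightarrow> (norm w)\<^sup>2 \<le> (norm v)\<^sup>2))"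

definition margin :: "nat \<Rightarrow> (nat \<Rightarrow> 'a::euclidean_space) \<Rightarrow> real" where
  "margin N x = 1 / norm (max_margin N x)"

end

theory Submission
  imports Defs
begin

lemma taylor_ub:
  fixes l dl :: "real \<Rightarrow> real"
  assumes d: "\<And>u. (l has_real_derivative dl u) (at u)"
    and L: "\<And>u v. \<bar>dl u - dl v\<bar> \<le> H * \<bar>u - v\<bar>"
  shows "l v \<le> l u + dl u * (v - u) + H / 2 * (v - u)^2"
proof -
  define h where "h y = l y - l u - dl u * (y - u) - H/2 * (y - u)^2" for y
  have hd: "(h has_real_derivative (dl y - dl u - H * (y - u))) (at y)" for y
    unfolding h_def
    by (auto intro!: derivative_eq_intros d simp: power2_eq_square algebra_simps)
  have hu: "h u = 0" by (simp add: h_def)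
  have "h v \<le> 0"
  proof (cases "u \<le> v")
    case True
    have "h u \<ge> h v"
    proof (rule DERIV_nonpos_imp_nonincreasing[OF True])
      fix y assume "u \<le> y" "y \<le> v"
      have "dl y - dl u \<le> H * (y - u)" using L[of y u] \<open>u \<le> y\<close> by auto
      then show "\<exists>d. (h has_real_derivative d) (at y) \<and> d \<le> 0" using hd[of y] by (intro exI[of _ "dl y - dl u - H * (y - u)"]) auto
    qed
    then show ?thesis using hu by simp
  next
    case False
    have "h v \<le> h u"
    proof (rule DERIV_nonneg_imp_nondecreasing[of v u])
      show "v \<le> u" using False by simp
    next
      fix y assume "v \<le> y" "y \<le> u"
      have "dl u - dl y \<le> H * (u - y)" using L[of u y] \<open>y \<le> u\<close> by auto
      then show "\<exists>d. (h has_real_derivative d) (at y) \<and> 0 \<le> d" using hd[of y] by (intro exI[of _ "dl y - dl u - H * (y - u)"]) (auto simp: algebra_simps)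
    qed
    then show ?thesis using hu by simp
  qed
  then show ?thesis by (simp add: h_def)
qed

lemma sum_sq_le_sq_sum:
  fixes a :: "nat \<Rightarrow> real"
  assumes "finite I" "\<And>i. i \<in> I \<Longrightarrow> 0 \<le> a i"
  shows "(\<Sum>i\<in>I. (a i)^2) \<le> (\<Sum>i\<in>I. a i)^2"
  using assms
proof (induction I rule: finite_induct)
  case (insert j F)
  have "0 \<le> sum a F" using insert by (auto intro: sum_nonneg)
  moreover have "0 \<le> a j" using insert by auto
  ultimately have "0 \<le> 2 * a j * sum a F" by simp
  then show ?case using insert by (simp add: power2_eq_square algebra_simps)
qed simp

lemma sq_convex:
  fixes p q :: "'a::real_inner"
  assumes "0 \<le> \<beta>" "\<beta> \<le> 1"
  shows "(norm (\<beta> *\<^sub>R p + (1 - \<beta>) *\<^sub>R q))^2 \<le> \<beta> * (norm p)^2 + (1 - \<beta>) * (norm q)^2"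
proof -
  have "norm (\<beta> *\<^sub>R p + (1 - \<beta>) *\<^sub>R q) \<le> \<beta> * norm p + (1 - \<beta>) * norm q"
    using norm_triangle_ineq[of "\<beta> *\<^sub>R p" "(1 - \<beta>) *\<^sub>R q"] assms by simp
  then have "(norm (\<beta> *\<^sub>R p + (1 - \<beta>) *\<^sub>R q))^2 \<le> (\<beta> * norm p + (1 - \<beta>) * norm q)^2"
    by (intro power_mono) auto
  also have "\<dots> \<le> \<beta> * (norm p)^2 + (1 - \<beta>) * (norm q)^2"
  proof -
    have "0 \<le> \<beta> * (1 - \<beta>) * (norm p - norm q)^2" using assms by simp
    then show ?thesis by (simp add: power2_eq_square algebra_simps)
  qed
  finally show ?thesis .
qed


locale data =
  fixes x :: "nat \<Rightarrow> 'a::euclidean_space" and N b :: nat and l dl :: "real \<Rightarrow> real"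
    and H \<sigma> :: real and wh :: 'a
  assumes N: "1 \<le> N" and b1: "1 \<le> b" and bN: "b \<le> N"
    and deriv: "\<And>u. (l has_real_derivative dl u) (at u)"
    and neg: "\<And>u. dl u < 0"
    and llim: "(l \<longlongrightarrow> 0) at_top"
    and lip: "\<And>u v. \<bar>dl u - dl v\<bar> \<le> H * \<bar>u - v\<bar>"
    and wh: "\<And>i. i < N \<Longrightarrow> 1 \<le> inner wh (x i)"
    and sig: "\<And>a. norm (\<Sum>i<N. a i *\<^sub>R x i) \<le> \<sigma> * sqrt (\<Sum>i<N. (a i)^2)"
begin

definition L :: "'a \<Rightarrow> real" where "L w = (1 / real N) * (\<Sum>i<N. l (inner w (x i)))"
abbreviation grad :: "'a \<Rightarrow> 'a" where "grad w \<equiv> full_grad dl N x w"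
definition K :: real where "K = H * \<sigma>^2 / real N"

lemma H_nonneg: "0 \<le> H"
  using lip[of 1 0] by auto

lemma K_nonneg: "0 \<le> K"
  using H_nonneg by (simp add: K_def)

lemma l_nonneg: "0 \<le> l u"
proof (rule ccontr)
  assume "\<not> 0 \<le> l u"
  then have "l u < 0" by simp
  then have "eventually (\<lambda>y. l u < l y) at_top"
    using order_tendstoD(1)[OF llim] by blast
  then obtain Y where Y: "\<And>y. y \<ge> Y \<Longrightarrow> l u < l y" by (auto simp: eventually_at_top_linorder)
  define y where "y = max Y (u + 1)"
  have "l u < l y" using Y by (simp add: y_def)
  moreover have "l u > l y"
    by (rule DERIV_neg_imp_decreasing) (auto simp: y_def intro: deriv neg)
  ultimately show False by simp
qed

lemma L_nonneg: "0 \<le> L w"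
  by (simp add: L_def sum_nonneg l_nonneg)

lemma sig_sub:
  assumes "I \<subseteq> {..<N}"
  shows "(norm (\<Sum>i\<in>I. a i *\<^sub>R x i))^2 \<le> \<sigma>^2 * (\<Sum>i\<in>I. (a i)^2)"
proof -
  define a' where "a' i = (if i \<in> I then a i else 0)" for i
  have fI: "finite I" using assms finite_subset by blast
  have e1: "(\<Sum>i<N. a' i *\<^sub>R x i) = (\<Sum>i\<in>I. a i *\<^sub>R x i)"
  proof -
    have "(\<Sum>i<N. a' i *\<^sub>R x i) = (\<Sum>i\<in>I. a' i *\<^sub>R x i)"
      by (rule sum.mono_neutral_right) (use assms in \<open>auto simp: a'_def\<close>)
    then show ?thesis by (simp add: a'_def)
  qed
  have e2: "(\<Sum>i<N. (a' i)^2) = (\<Sum>i\<in>I. (a i)^2)"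
  proof -
    have "(\<Sum>i<N. (a' i)^2) = (\<Sum>i\<in>I. (a' i)^2)"
      by (rule sum.mono_neutral_right) (use assms in \<open>auto simp: a'_def\<close>)
    then show ?thesis by (simp add: a'_def)
  qed
  have "norm (\<Sum>i\<in>I. a i *\<^sub>R x i) \<le> \<sigma> * sqrt (\<Sum>i\<in>I. (a i)^2)"
    using sig[of a'] e1 e2 by simp
  then have "(norm (\<Sum>i\<in>I. a i *\<^sub>R x i))^2 \<le> (\<sigma> * sqrt (\<Sum>i\<in>I. (a i)^2))^2"
    by (intro power_mono) auto
  also have "\<dots> = \<sigma>^2 * (\<Sum>i\<in>I. (a i)^2)"
    by (simp add: power_mult_distrib sum_nonneg)
  finally show ?thesis .
qed

lemma x_nonzero: "i < N \<Longrightarrow> x i \<noteq> 0"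
  using wh[of i] by auto

lemma sigma_pos: "0 < \<sigma>"
proof -
  have n0: "0 < norm (x 0)" using x_nonzero[of 0] N by simp
  have e1: "(\<Sum>i<N. (if i = 0 then 1 else 0) *\<^sub>R x i) = (\<Sum>i<N. if i = 0 then x i else 0)"
    by (rule sum.cong) auto
  have e2: "(\<Sum>i<N. if i = 0 then x i else 0) = x 0" using N by simp
  have e3: "(\<Sum>i<N. (if i = 0 then (1::real) else 0)^2) = (\<Sum>i<N. if i = 0 then 1 else 0)"
    by (rule sum.cong) auto
  have e4: "(\<Sum>i<N. if i = 0 then (1::real) else 0) = 1" using N by simp
  have "norm (x 0) \<le> \<sigma> * sqrt 1"
    using sig[of "\<lambda>i. if i = 0 then 1 else 0"] unfolding e1 e2 e3 e4 .
  then have "norm (x 0) \<le> \<sigma>" by simp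
  then show ?thesis using n0 by linarith
qed

lemma P5: "(\<Sum>i<N. (inner d (x i))^2) \<le> \<sigma>^2 * (norm d)^2"
proof -
  define s where "s = (\<Sum>i<N. (inner d (x i))^2)"
  have s0: "0 \<le> s" by (simp add: s_def sum_nonneg)
  have "s = inner d (\<Sum>i<N. inner d (x i) *\<^sub>R x i)"
    by (simp add: s_def inner_sum_right power2_eq_square)
  also have "\<dots> \<le> norm d * norm (\<Sum>i<N. inner d (x i) *\<^sub>R x i)"
    by (rule norm_cauchy_schwarz)
  also have "\<dots> \<le> norm d * (\<sigma> * sqrt s)"
    using sig[of "\<lambda>i. inner d (x i)"] by (simp add: s_def mult_left_mono)
  finally have 1: "s \<le> norm d * \<sigma> * sqrt s" by simp
  show ?thesis
  proof (cases "s = 0")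
    case True then show ?thesis unfolding s_def[symmetric] by simp
  next
    case False
    then have "0 < sqrt s" using s0 by simp
    have "sqrt s * sqrt s \<le> norm d * \<sigma> * sqrt s" using 1 s0 by simp
    then have "sqrt s \<le> norm d * \<sigma>" using \<open>0 < sqrt s\<close> mult_right_le_imp_le[of "sqrt s" "sqrt s" "norm d * \<sigma>"] by simp
    then have "(sqrt s)^2 \<le> (norm d * \<sigma>)^2" using s0 by (intro power_mono) auto
    then show ?thesis using s0 by (simp add: s_def power_mult_distrib mult.commute)
  qed
qed

lemma smooth: "L v' \<le> L v + inner (grad v) (v' - v) + K / 2 * (norm (v' - v))^2"
proof -
  define d where "d = v' - v"
  have "(\<Sum>i<N. l (inner v' (x i))) \<le> (\<Sum>i<N. l (inner v (x i)) + dl (inner v (x i)) * inner d (x i) + H / 2 * (inner d (x i))^2)"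
  proof (rule sum_mono)
    fix i
    show "l (inner v' (x i)) \<le> l (inner v (x i)) + dl (inner v (x i)) * inner d (x i) + H / 2 * (inner d (x i))^2"
      using taylor_ub[OF deriv lip, of "inner v' (x i)" "inner v (x i)"]
      by (simp add: d_def inner_diff_left)
  qed
  also have "\<dots> = (\<Sum>i<N. l (inner v (x i))) + (\<Sum>i<N. dl (inner v (x i)) * inner d (x i)) + H / 2 * (\<Sum>i<N. (inner d (x i))^2)"
    by (simp add: sum.distrib sum_distrib_left)
  also have "\<dots> \<le> (\<Sum>i<N. l (inner v (x i))) + (\<Sum>i<N. dl (inner v (x i)) * inner d (x i)) + H / 2 * (\<sigma>^2 * (norm d)^2)"
    using P5[of d] H_nonneg by (intro add_left_mono mult_left_mono) auto
  finally have 1: "(\<Sum>i<N. l (inner v' (x i))) \<le> (\<Sum>i<N. l (inner v (x i))) + (\<Sum>i<N. dl (inner v (x i)) * inner d (x i)) + H / 2 * (\<sigma>^2 * (norm d)^2)" .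
  have g: "inner (grad v) d = (1 / real N) * (\<Sum>i<N. dl (inner v (x i)) * inner d (x i))"
    unfolding full_grad_def inner_scaleR_left inner_sum_left by (simp add: inner_commute)
  have Npos: "0 < real N" using N by simp
  have "L v' \<le> (1 / real N) * ((\<Sum>i<N. l (inner v (x i))) + (\<Sum>i<N. dl (inner v (x i)) * inner d (x i)) + H / 2 * (\<sigma>^2 * (norm d)^2))"
    unfolding L_def using 1 Npos by (intro mult_left_mono) auto
  also have "\<dots> = L v + inner (grad v) d + K / 2 * (norm d)^2"
    using Npos by (simp add: L_def g K_def field_simps)
  finally show ?thesis by (simp add: d_def)
qed

lemma grad_lip: "norm (grad v - grad w) \<le> K * norm (v - w)"
proof -
  have e: "grad v - grad w = (1 / real N) *\<^sub>R (\<Sum>i<N. (dl (inner v (x i)) - dl (inner w (x i))) *\<^sub>R x i)"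
    by (simp add: full_grad_def scaleR_diff_right sum_subtractf scaleR_left_diff_distrib)
  have "(norm (\<Sum>i<N. (dl (inner v (x i)) - dl (inner w (x i))) *\<^sub>R x i))^2
      \<le> \<sigma>^2 * (\<Sum>i<N. (dl (inner v (x i)) - dl (inner w (x i)))^2)"
    by (rule sig_sub) simp
  also have "\<dots> \<le> \<sigma>^2 * (\<Sum>i<N. H^2 * (inner (v - w) (x i))^2)"
  proof (intro mult_left_mono sum_mono)
    fix i
    have "\<bar>dl (inner v (x i)) - dl (inner w (x i))\<bar> \<le> H * \<bar>inner (v - w) (x i)\<bar>"
      using lip[of "inner v (x i)" "inner w (x i)"] by (simp add: inner_diff_left)
    then have "\<bar>dl (inner v (x i)) - dl (inner w (x i))\<bar>^2 \<le> (H * \<bar>inner (v - w) (x i)\<bar>)^2"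
      by (intro power_mono) auto
    then show "(dl (inner v (x i)) - dl (inner w (x i)))^2 \<le> H^2 * (inner (v - w) (x i))^2"
      by (simp add: power_mult_distrib)
  qed simp
  also have "\<dots> \<le> \<sigma>^2 * (H^2 * (\<sigma>^2 * (norm (v - w))^2))"
  proof -
    have "(\<Sum>i<N. H^2 * (inner (v - w) (x i))^2) = H^2 * (\<Sum>i<N. (inner (v - w) (x i))^2)"
      by (rule sum_distrib_left[symmetric])
    also have "\<dots> \<le> H^2 * (\<sigma>^2 * (norm (v - w))^2)"
      using P5[of "v - w"] by (intro mult_left_mono) auto
    finally show ?thesis by (intro mult_left_mono) auto
  qed
  also have "\<dots> = (H * \<sigma>^2 * norm (v - w))^2" by (simp add: power2_eq_square)
  finally have "norm (\<Sum>i<N. (dl (inner v (x i)) - dl (inner w (x i))) *\<^sub>R x i) \<le> H * \<sigma>^2 * norm (v - w)"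
    by (rule power2_le_imp_le) (use H_nonneg in auto)
  then have "(1 / real N) * norm (\<Sum>i<N. (dl (inner v (x i)) - dl (inner w (x i))) *\<^sub>R x i) \<le> (1 / real N) * (H * \<sigma>^2 * norm (v - w))"
    by (intro mult_left_mono) auto
  also have "\<dots> = K * norm (v - w)" by (simp add: K_def)
  finally show ?thesis by (simp add: e)
qed

lemma gsum: "(\<Sum>i<N. - dl (inner w (x i))) \<le> real N * norm wh * norm (grad w)"
proof -
  have "(\<Sum>i<N. - dl (inner w (x i))) \<le> (\<Sum>i<N. - dl (inner w (x i)) * inner (x i) wh)"
  proof (rule sum_mono)
    fix i assume "i \<in> {..<N}"
    then show "- dl (inner w (x i)) \<le> - dl (inner w (x i)) * inner (x i) wh"
      using wh[of i] neg[of "inner w (x i)"] by (simp add: inner_commute)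
  qed
  also have "\<dots> = - real N * inner (grad w) wh"
    using N by (simp add: full_grad_def inner_sum_left sum_negf)
  also have "\<dots> \<le> real N * (norm (grad w) * norm wh)"
  proof -
    have "- inner (grad w) wh \<le> norm (grad w) * norm wh"
      using Cauchy_Schwarz_ineq2[of "grad w" wh] by linarith
    then show ?thesis using mult_left_mono[of "- inner (grad w) wh" _ "real N"] by simp
  qed
  finally show ?thesis by (simp add: mult.commute mult.left_commute)
qed

end


lemma batches_finite: "finite (batches N b)"
  unfolding batches_def by (rule finite_subset[of _ "Pow {..<N}"]) auto

lemma card_batches: "card (batches N b) = N choose b"
  unfolding batches_def using n_subsets[of "{..<N}" b] by simp

lemma card_batches_pos: "b \<le> N \<Longrightarrow> 0 < card (batches N b)"
  by (simp add: card_batches)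

lemma batches_with:
  assumes "i < N" "1 \<le> b"
  shows "card {B \<in> batches N b. i \<in> B} = (N - 1) choose (b - 1)"
proof -
  define C where "C = {D. D \<subseteq> {..<N} - {i} \<and> card D = b - 1}"
  have "{B \<in> batches N b. i \<in> B} = insert i ` C"
  proof (intro equalityI subsetI)
    fix B assume "B \<in> {B \<in> batches N b. i \<in> B}"
    then have B: "B \<subseteq> {..<N}" "card B = b" "i \<in> B" by (auto simp: batches_def)
    then have "finite B" using finite_subset by blast
    then have "B - {i} \<in> C" using B by (auto simp: C_def)
    moreover have "B = insert i (B - {i})" using B by auto
    ultimately show "B \<in> insert i ` C" by blast
  next
    fix B assume "B \<in> insert i ` C"
    then obtain D where D: "D \<subseteq> {..<N} - {i}" "card D = b - 1" "B = insert i D" by (auto simp: C_def)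
    have "finite D" using D(1) finite_subset by blast
    moreover have "i \<notin> D" using D(1) by auto
    ultimately have "card B = Suc (card D)" using D(3) by simp
    then have "card B = b" using D(2) assms by simp
    then show "B \<in> {B \<in> batches N b. i \<in> B}" using D assms by (auto simp: batches_def)
  qed
  moreover have "inj_on (insert i) C"
  proof (rule inj_onI)
    fix D D' assume "D \<in> C" "D' \<in> C" "insert i D = insert i D'"
    then have "i \<notin> D" "i \<notin> D'" by (auto simp: C_def)
    then show "D = D'" using \<open>insert i D = insert i D'\<close> by (metis Diff_insert_absorb)
  qed
  moreover have "card C = (N - 1) choose (b - 1)"
    unfolding C_def using n_subsets[of "{..<N} - {i}" "b - 1"] assms by simp
  ultimately show ?thesis by (simp add: card_image)
qed

lemma batch_count:
  assumes "i < N" "1 \<le> b" "b \<le> N"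
  shows "real (card {B \<in> batches N b. i \<in> B}) = real b * real (card (batches N b)) / real N"
proof -
  obtain n k where nk: "N = Suc n" "b = Suc k" using assms by (metis Suc_le_D not0_implies_Suc not_less0 not_one_le_zero)
  have "Suc n * (n choose k) = (Suc n choose Suc k) * Suc k" by (rule Suc_times_binomial_eq)
  then have "real (Suc n) * real (n choose k) = real (Suc n choose Suc k) * real (Suc k)"
    by (metis of_nat_mult)
  then show ?thesis using assms
    by (simp add: batches_with card_batches nk field_simps del: of_nat_Suc)
qed

lemma sum_batches:
  fixes f :: "nat \<Rightarrow> 'v::real_vector"
  assumes "1 \<le> b" "b \<le> N"
  shows "(\<Sum>B\<in>batches N b. \<Sum>i\<in>B. f i) = (real b * real (card (batches N b)) / real N) *\<^sub>R (\<Sum>i<N. f i)"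
proof -
  have "(\<Sum>B\<in>batches N b. \<Sum>i\<in>B. f i) = (\<Sum>B\<in>batches N b. \<Sum>i<N. if i \<in> B then f i else 0)"
  proof (rule sum.cong[OF refl])
    fix B assume "B \<in> batches N b"
    then have B: "B \<subseteq> {..<N}" by (auto simp: batches_def)
    have "(\<Sum>i<N. if i \<in> B then f i else 0) = (\<Sum>i\<in>B. if i \<in> B then f i else 0)"
      by (rule sum.mono_neutral_right) (use B in auto)
    then show "(\<Sum>i\<in>B. f i) = (\<Sum>i<N. if i \<in> B then f i else 0)" by simp
  qed
  also have "\<dots> = (\<Sum>i<N. \<Sum>B\<in>batches N b. if i \<in> B then f i else 0)"
    by (rule sum.swap)
  also have "\<dots> = (\<Sum>i<N. real (card {B \<in> batches N b. i \<in> B}) *\<^sub>R f i)"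
  proof (rule sum.cong[OF refl])
    fix i
    have "(\<Sum>B\<in>batches N b. if i \<in> B then f i else 0) = (\<Sum>B\<in>{B \<in> batches N b. i \<in> B}. f i)"
      by (simp add: sum.inter_filter batches_finite)
    then show "(\<Sum>B\<in>batches N b. if i \<in> B then f i else 0) = real (card {B \<in> batches N b. i \<in> B}) *\<^sub>R f i"
      by (simp add: sum_constant_scaleR)
  qed
  also have "\<dots> = (\<Sum>i<N. (real b * real (card (batches N b)) / real N) *\<^sub>R f i)"
    by (rule sum.cong[OF refl]) (use batch_count assms in auto)
  also have "\<dots> = (real b * real (card (batches N b)) / real N) *\<^sub>R (\<Sum>i<N. f i)"
    by (simp add: scaleR_sum_right)
  finally show ?thesis .
qed

context data begin

abbreviation Bs where "Bs \<equiv> batches N b"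
definition c1 :: real where "c1 = \<sigma>^2 * real N * (norm wh)^2 / real b"

lemma avg_grad: "(\<Sum>B\<in>Bs. batch_grad dl b x B w) = real (card Bs) *\<^sub>R grad w"
proof -
  have "(\<Sum>B\<in>Bs. batch_grad dl b x B w) = (1 / real b) *\<^sub>R (\<Sum>B\<in>Bs. \<Sum>i\<in>B. dl (inner w (x i)) *\<^sub>R x i)"
    by (simp add: batch_grad_def scaleR_sum_right)
  also have "\<dots> = (1 / real b) *\<^sub>R ((real b * real (card Bs) / real N) *\<^sub>R (\<Sum>i<N. dl (inner w (x i)) *\<^sub>R x i))"
    by (simp add: sum_batches b1 bN)
  also have "\<dots> = real (card Bs) *\<^sub>R grad w"
    using b1 by (simp add: full_grad_def)
  finally show ?thesis .
qed

lemma avg_sq: "(\<Sum>B\<in>Bs. (norm (batch_grad dl b x B w))^2) \<le> real (card Bs) * (c1 * (norm (grad w))^2)"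
proof -
  define g where "g i = dl (inner w (x i))" for i
  have bpos: "0 < real b" using b1 by simp
  have "(\<Sum>B\<in>Bs. (norm (batch_grad dl b x B w))^2) \<le> (\<Sum>B\<in>Bs. (1 / real b)^2 * (\<sigma>^2 * (\<Sum>i\<in>B. (g i)^2)))"
  proof (rule sum_mono)
    fix B assume "B \<in> Bs"
    then have B: "B \<subseteq> {..<N}" by (auto simp: batches_def)
    have "(norm (batch_grad dl b x B w))^2 = (1 / real b)^2 * (norm (\<Sum>i\<in>B. g i *\<^sub>R x i))^2"
      using bpos by (simp add: batch_grad_def g_def power_divide)
    also have "\<dots> \<le> (1 / real b)^2 * (\<sigma>^2 * (\<Sum>i\<in>B. (g i)^2))"
      by (intro mult_left_mono sig_sub B) auto
    finally show "(norm (batch_grad dl b x B w))^2 \<le> (1 / real b)^2 * (\<sigma>^2 * (\<Sum>i\<in>B. (g i)^2))" .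
  qed
  also have "\<dots> = (1 / real b)^2 * \<sigma>^2 * (\<Sum>B\<in>Bs. \<Sum>i\<in>B. (g i)^2)"
    by (simp add: sum_distrib_left mult.assoc)
  also have "\<dots> = (1 / real b)^2 * \<sigma>^2 * ((real b * real (card Bs) / real N) * (\<Sum>i<N. (g i)^2))"
    using sum_batches[OF b1 bN, of "\<lambda>i. (g i)^2"] by simp
  also have "\<dots> \<le> (1 / real b)^2 * \<sigma>^2 * ((real b * real (card Bs) / real N) * (real N * norm wh * norm (grad w))^2)"
  proof -
    have "(\<Sum>i<N. (g i)^2) = (\<Sum>i<N. (- g i)^2)" by simp
    also have "\<dots> \<le> (\<Sum>i<N. - g i)^2"
      by (rule sum_sq_le_sq_sum) (auto simp: g_def less_imp_le neg)
    also have "\<dots> \<le> (real N * norm wh * norm (grad w))^2"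
    proof (rule power_mono)
      show "(\<Sum>i<N. - g i) \<le> real N * norm wh * norm (grad w)" using gsum[of w] by (simp add: g_def)
      show "0 \<le> (\<Sum>i<N. - g i)" by (rule sum_nonneg) (auto simp: g_def less_imp_le neg)
    qed
    finally show ?thesis by (intro mult_left_mono) auto
  qed
  also have "\<dots> = real (card Bs) * (c1 * (norm (grad w))^2)"
    using bpos N by (simp add: c1_def power2_eq_square field_simps)
  finally show ?thesis .
qed

end


definition Om :: "'b set \<Rightarrow> nat \<Rightarrow> (nat \<Rightarrow> 'b) set" where
  "Om S T = PiE {1..T} (\<lambda>_. S)"

definition EE :: "'b set \<Rightarrow> nat \<Rightarrow> ((nat \<Rightarrow> 'b) \<Rightarrow> real) \<Rightarrow> real" where
  "EE S T F = (\<Sum>\<rho>\<in>Om S T. F \<rho>) / real (card (Om S T))"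

definition dep :: "nat \<Rightarrow> ((nat \<Rightarrow> 'b) \<Rightarrow> 'c) \<Rightarrow> bool" where
  "dep k F \<longleftrightarrow> (\<forall>w v. (\<forall>s\<in>{1..k}. w s = v s) \<longrightarrow> F w = F v)"

lemma finite_Om: "finite S \<Longrightarrow> finite (Om S T)"
  by (simp add: Om_def finite_PiE)

lemma card_Om: "finite S \<Longrightarrow> card (Om S T) = card S ^ T"
  by (simp add: Om_def card_PiE)

lemma EE_add: "EE S T (\<lambda>w. F w + G w) = EE S T F + EE S T G"
  by (simp add: EE_def sum.distrib add_divide_distrib)

lemma EE_diff: "EE S T (\<lambda>w. F w - G w) = EE S T F - EE S T G"
  by (simp add: EE_def sum_subtractf diff_divide_distrib)

lemma EE_cmult: "EE S T (\<lambda>w. c * F w) = c * EE S T F"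
  by (simp add: EE_def sum_distrib_left[symmetric])

lemma EE_mono: "(\<And>w. w \<in> Om S T \<Longrightarrow> F w \<le> G w) \<Longrightarrow> EE S T F \<le> EE S T G"
  unfolding EE_def by (intro divide_right_mono sum_mono) auto

lemma EE_nonneg: "(\<And>w. w \<in> Om S T \<Longrightarrow> 0 \<le> F w) \<Longrightarrow> 0 \<le> EE S T F"
  unfolding EE_def by (intro divide_nonneg_nonneg sum_nonneg) auto

lemma EE_const: "finite S \<Longrightarrow> S \<noteq> {} \<Longrightarrow> EE S T (\<lambda>_. c) = c"
  by (simp add: EE_def card_Om card_eq_0_iff)

lemma sum_PiE_insert:
  assumes "t \<notin> J"
  shows "(\<Sum>\<rho>\<in>PiE (insert t J) A. F \<rho>) = (\<Sum>B\<in>A t. \<Sum>g\<in>PiE J A. F (g(t := B)))"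
proof -
  have "(\<Sum>\<rho>\<in>PiE (insert t J) A. F \<rho>) = (\<Sum>\<rho>\<in>(\<lambda>(y, g). g(t := y)) ` (A t \<times> PiE J A). F \<rho>)"
    by (simp add: PiE_insert_eq)
  also have "\<dots> = (\<Sum>p\<in>A t \<times> PiE J A. F ((\<lambda>(y, g). g(t := y)) p))"
    by (rule sum.reindex[OF inj_combinator[OF assms], unfolded comp_def])
  also have "\<dots> = (\<Sum>B\<in>A t. \<Sum>g\<in>PiE J A. F (g(t := B)))"
    by (simp add: sum.cartesian_product split_def)
  finally show ?thesis .
qed

lemma EE_indep:
  assumes S: "finite S" "S \<noteq> {}" and t: "1 \<le> t" "t \<le> T"
    and Z: "\<And>w BB. Z (w(t := BB)) = Z w"
  shows "EE S T (\<lambda>w. h (Z w) (w t)) = EE S T (\<lambda>w. (\<Sum>B\<in>S. h (Z w) B) / real (card S))"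
proof -
  define J where "J = {1..T} - {t}"
  have IJ: "{1..T} = insert t J" and tJ: "t \<notin> J" using t by (auto simp: J_def)
  have cS: "0 < real (card S)" using S by (simp add: card_gt_0_iff)
  have "(\<Sum>\<rho>\<in>Om S T. h (Z \<rho>) (\<rho> t)) = (\<Sum>B\<in>S. \<Sum>g\<in>PiE J (\<lambda>_. S). h (Z g) B)"
    unfolding Om_def IJ sum_PiE_insert[OF tJ] by (simp add: Z)
  also have "\<dots> = (\<Sum>B\<in>S. \<Sum>g\<in>PiE J (\<lambda>_. S). (\<Sum>B'\<in>S. h (Z g) B') / real (card S))"
  proof -
    have "(\<Sum>B\<in>S. \<Sum>g\<in>PiE J (\<lambda>_. S). (\<Sum>B'\<in>S. h (Z g) B') / real (card S))
        = real (card S) * ((\<Sum>g\<in>PiE J (\<lambda>_. S). \<Sum>B'\<in>S. h (Z g) B') / real (card S))"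
      by (simp add: sum_divide_distrib[symmetric])
    also have "\<dots> = (\<Sum>g\<in>PiE J (\<lambda>_. S). \<Sum>B'\<in>S. h (Z g) B')" using cS by simp
    also have "\<dots> = (\<Sum>B\<in>S. \<Sum>g\<in>PiE J (\<lambda>_. S). h (Z g) B)" by (rule sum.swap)
    finally show ?thesis by simp
  qed
  also have "\<dots> = (\<Sum>\<rho>\<in>Om S T. (\<Sum>B\<in>S. h (Z \<rho>) B) / real (card S))"
    unfolding Om_def IJ sum_PiE_insert[OF tJ] by (simp add: Z)
  finally show ?thesis by (simp add: EE_def)
qed

lemma dep_upd: "dep k F \<Longrightarrow> k < t \<Longrightarrow> F (w(t := B)) = F w"
  unfolding dep_def by (metis atLeastAtMost_iff fun_upd_other not_le)

lemma dep_mono: "dep k F \<Longrightarrow> k \<le> k' \<Longrightarrow> dep k' F"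
  unfolding dep_def by auto

lemma dep_sgdm: "dep t (\<lambda>w. sgdm_state dl b x \<beta> \<eta> w0 w t)"
proof (induction t)
  case 0
  then show ?case by (simp add: dep_def)
next
  case (Suc t)
  show ?case unfolding dep_def
  proof (intro allI impI)
    fix w v :: "nat \<Rightarrow> nat set"
    assume a: "\<forall>s\<in>{1..Suc t}. w s = v s"
    then have "sgdm_state dl b x \<beta> \<eta> w0 w t = sgdm_state dl b x \<beta> \<eta> w0 v t"
      using Suc.IH unfolding dep_def by auto
    moreover have "w (Suc t) = v (Suc t)" using a by auto
    ultimately show "sgdm_state dl b x \<beta> \<eta> w0 w (Suc t) = sgdm_state dl b x \<beta> \<eta> w0 v (Suc t)"
      by (simp add: Let_def)
  qed
qed


lemma amgm: "0 < lam \<Longrightarrow> (p::real) * q \<le> p^2 / (2 * lam) + lam * q^2 / 2"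
proof -
  assume l: "0 < lam"
  have "0 \<le> (p - lam * q)^2" by simp
  then have "2 * lam * (p * q) \<le> p^2 + lam^2 * q^2" by (simp add: power2_eq_square algebra_simps)
  then have "p * q \<le> (p^2 + lam^2 * q^2) / (2 * lam)" using l by (simp add: field_simps)
  also have "\<dots> = p^2 / (2 * lam) + lam * q^2 / 2" using l by (simp add: field_simps power2_eq_square)
  finally show ?thesis .
qed

lemma telescope:
  fixes P d :: "nat \<Rightarrow> real"
  assumes "\<And>k. k < T \<Longrightarrow> P (Suc k) \<le> P k - d k"
  shows "(\<Sum>k<T. d k) \<le> P 0 - P T"
  using assms
proof (induction T)
  case (Suc T)
  then have "(\<Sum>k<T. d k) \<le> P 0 - P T" by auto
  moreover have "P (Suc T) \<le> P T - d T" using Suc.prems by auto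
  ultimately show ?case by simp
qed simp

locale sgd = data +
  fixes \<beta> \<eta> :: real and w0 :: 'a
  assumes beta0: "0 \<le> \<beta>" and beta1: "\<beta> < 1" and eta0: "0 < \<eta>"
    and step: "\<eta> * (K * \<beta> * sqrt c1 / (1 - \<beta>) + K * c1 / 2) < 1"
begin

definition lam where "lam = sqrt c1"
definition cc where "cc = \<eta> * \<beta> / (1 - \<beta>)"
definition alpha where "alpha = \<eta> * K * cc / (2 * lam * (1 - \<beta>))"
definition delta where "delta = 1 - \<eta> * (K * \<beta> * lam / (1 - \<beta>) + K * c1 / 2)"

definition W where "W k w = sgdm_w dl b x \<beta> \<eta> w0 w k"
definition Mo where "Mo k w = snd (sgdm_state dl b x \<beta> \<eta> w0 w k)"
definition V where "V k w = W (Suc k) w - cc *\<^sub>R Mo k w"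
definition gk where "gk k w = batch_grad dl b x (w (Suc k)) (W (Suc k) w)"

lemma wh_nz: "wh \<noteq> 0"
  using wh[of 0] N by auto

lemma c1_pos: "0 < c1"
  using sigma_pos N b1 wh_nz by (simp add: c1_def)

lemma lam_pos: "0 < lam"
  using c1_pos by (simp add: lam_def)

lemma lam_sq: "lam^2 = c1"
  using c1_pos by (simp add: lam_def)

lemma delta_pos: "0 < delta"
  using step by (simp add: delta_def lam_def)

lemma cc_nonneg: "0 \<le> cc"
  using beta0 beta1 eta0 by (simp add: cc_def)

lemma alpha_nonneg: "0 \<le> alpha"
  using cc_nonneg K_nonneg lam_pos beta1 eta0 by (simp add: alpha_def)

lemma W_Suc: "W (Suc k) w = W k w - \<eta> *\<^sub>R Mo k w"
  by (simp add: W_def Mo_def sgdm_w_def Let_def)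

lemma Mo_Suc: "Mo (Suc k) w = \<beta> *\<^sub>R Mo k w + (1 - \<beta>) *\<^sub>R gk k w"
  by (simp add: W_def Mo_def gk_def sgdm_w_def Let_def)

lemma Mo_0: "Mo 0 w = 0"
  by (simp add: Mo_def)

lemma V_0: "V 0 w = w0"
  by (simp add: V_def W_def Mo_def sgdm_w_def Let_def)

lemma V_Suc: "V (Suc k) w = V k w - \<eta> *\<^sub>R gk k w"
proof -
  have b1': "1 - \<beta> \<noteq> 0" using beta1 by simp
  have "V (Suc k) w = W (Suc k) w - (\<eta> + cc) *\<^sub>R (\<beta> *\<^sub>R Mo k w + (1 - \<beta>) *\<^sub>R gk k w)"
    unfolding V_def W_Suc[of "Suc k"] Mo_Suc[symmetric] by (simp add: algebra_simps)
  also have "\<dots> = W (Suc k) w - ((\<eta> + cc) * \<beta>) *\<^sub>R Mo k w - ((\<eta> + cc) * (1 - \<beta>)) *\<^sub>R gk k w"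
    by (simp add: scaleR_right_distrib algebra_simps)
  also have "(\<eta> + cc) * \<beta> = cc" using b1' by (simp add: cc_def field_simps)
  also have "(\<eta> + cc) * (1 - \<beta>) = \<eta>" using b1' by (simp add: cc_def field_simps)
  also have "W (Suc k) w - cc *\<^sub>R Mo k w - \<eta> *\<^sub>R gk k w = V k w - \<eta> *\<^sub>R gk k w"
    by (simp add: V_def)
  finally show ?thesis .
qed

lemma dep_st: "dep k (\<lambda>w. sgdm_state dl b x \<beta> \<eta> w0 w k)"
  by (rule dep_sgdm)

lemma dep_W: "dep k (W (Suc k))"
  unfolding dep_def
proof (intro allI impI)
  fix w v :: "nat \<Rightarrow> nat set" assume a: "\<forall>s\<in>{1..k}. w s = v s"
  have "sgdm_state dl b x \<beta> \<eta> w0 w k = sgdm_state dl b x \<beta> \<eta> w0 v k"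
    using dep_st[of k] a unfolding dep_def by blast
  then show "W (Suc k) w = W (Suc k) v" by (simp add: W_Suc W_def Mo_def sgdm_w_def Let_def)
qed

lemma dep_Mo: "dep k (Mo k)"
  unfolding dep_def
proof (intro allI impI)
  fix w v :: "nat \<Rightarrow> nat set" assume a: "\<forall>s\<in>{1..k}. w s = v s"
  have "sgdm_state dl b x \<beta> \<eta> w0 w k = sgdm_state dl b x \<beta> \<eta> w0 v k"
    using dep_st[of k] a unfolding dep_def by blast
  then show "Mo k w = Mo k v" by (simp add: Mo_def)
qed

lemma dep_V: "dep k (V k)"
  unfolding dep_def
proof (intro allI impI)
  fix w v :: "nat \<Rightarrow> nat set" assume a: "\<forall>s\<in>{1..k}. w s = v s"
  have "W (Suc k) w = W (Suc k) v" using dep_W[of k] a unfolding dep_def by blast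
  moreover have "Mo k w = Mo k v" using dep_Mo[of k] a unfolding dep_def by blast
  ultimately show "V k w = V k v" by (simp add: V_def)
qed

lemma Bs_fin: "finite Bs" by (rule batches_finite)
lemma Bs_ne: "Bs \<noteq> {}" using card_batches_pos[OF bN] by auto

lemma step_ineq:
  assumes kT: "k < T"
  defines "E \<equiv> EE Bs T"
  shows "E (\<lambda>w. L (V (Suc k) w)) + alpha * E (\<lambda>w. (norm (Mo (Suc k) w))^2)
       \<le> E (\<lambda>w. L (V k w)) + alpha * E (\<lambda>w. (norm (Mo k w))^2)
         - \<eta> * delta * E (\<lambda>w. (norm (grad (W (Suc k) w)))^2)"
proof -
  define A' where "A' = E (\<lambda>w. L (V (Suc k) w))"
  define A where "A = E (\<lambda>w. L (V k w))"
  define P' where "P' = E (\<lambda>w. (norm (Mo (Suc k) w))^2)"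
  define P where "P = E (\<lambda>w. (norm (Mo k w))^2)"
  define a where "a = E (\<lambda>w. (norm (grad (W (Suc k) w)))^2)"
  define G where "G = E (\<lambda>w. (norm (gk k w))^2)"
  define I where "I = E (\<lambda>w. inner (grad (V k w)) (gk k w))"
  define J where "J = E (\<lambda>w. inner (grad (V k w)) (grad (W (Suc k) w)))"
  have t: "1 \<le> Suc k" "Suc k \<le> T" using kT by auto
  have Zs: "V k (w(Suc k := B)) = V k w" "W (Suc k) (w(Suc k := B)) = W (Suc k) w" for w B
    using dep_upd[OF dep_V[of k]] dep_upd[OF dep_W[of k]] by auto
  have 1: "A' \<le> A - \<eta> * I + K / 2 * \<eta>^2 * G"
  proof -
    have "A' \<le> E (\<lambda>w. L (V k w) - \<eta> * inner (grad (V k w)) (gk k w) + K / 2 * \<eta>^2 * (norm (gk k w))^2)"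
      unfolding A'_def E_def
    proof (rule EE_mono)
      fix w
      show "L (V (Suc k) w) \<le> L (V k w) - \<eta> * inner (grad (V k w)) (gk k w) + K / 2 * \<eta>^2 * (norm (gk k w))^2"
        using smooth[of "V (Suc k) w" "V k w"] eta0 unfolding V_Suc
        by (simp add: power_mult_distrib)
    qed
    also have "\<dots> = A - \<eta> * I + K / 2 * \<eta>^2 * G"
      unfolding A_def I_def G_def E_def EE_add EE_diff EE_cmult by simp
    finally show ?thesis .
  qed
  \<comment> \<open>(2) unbiasedness\<close>
  have 2: "I = J"
  proof -
    have "I = E (\<lambda>w. (\<lambda>z B. inner (grad (fst z)) (batch_grad dl b x B (snd z))) (V k w, W (Suc k) w) (w (Suc k)))"
      by (simp add: I_def gk_def)
    also have "\<dots> = E (\<lambda>w. (\<Sum>B\<in>Bs. inner (grad (V k w)) (batch_grad dl b x B (W (Suc k) w))) / real (card Bs))"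
      unfolding E_def by (subst EE_indep[OF Bs_fin Bs_ne t]) (auto simp: Zs)
    also have "\<dots> = J"
    proof -
      have "(\<Sum>B\<in>Bs. inner u (batch_grad dl b x B v)) / real (card Bs) = inner u (grad v)" for u v
      proof -
        have "(\<Sum>B\<in>Bs. inner u (batch_grad dl b x B v)) = inner u (real (card Bs) *\<^sub>R grad v)"
          by (simp add: inner_sum_right[symmetric] avg_grad)
        then show ?thesis using card_batches_pos[OF bN] by simp
      qed
      then show ?thesis by (simp add: J_def)
    qed
    finally show ?thesis .
  qed
  have 3: "G \<le> c1 * a"
  proof -
    have "G = E (\<lambda>w. (\<lambda>z B. (norm (batch_grad dl b x B z))^2) (W (Suc k) w) (w (Suc k)))"
      by (simp add: G_def gk_def)
    also have "\<dots> = E (\<lambda>w. (\<Sum>B\<in>Bs. (norm (batch_grad dl b x B (W (Suc k) w)))^2) / real (card Bs))"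
      unfolding E_def by (subst EE_indep[OF Bs_fin Bs_ne t]) (auto simp: Zs)
    also have "\<dots> \<le> E (\<lambda>w. c1 * (norm (grad (W (Suc k) w)))^2)"
      unfolding E_def
    proof (rule EE_mono)
      fix w
      have cp: "0 < real (card Bs)" using card_batches_pos[OF bN] by simp
      show "(\<Sum>B\<in>Bs. (norm (batch_grad dl b x B (W (Suc k) w)))^2) / real (card Bs) \<le> c1 * (norm (grad (W (Suc k) w)))^2"
        using avg_sq[of "W (Suc k) w"] cp by (simp add: divide_simps mult.commute)
    qed
    also have "\<dots> = c1 * a" unfolding a_def E_def EE_cmult ..
    finally show ?thesis .
  qed
  \<comment> \<open>(4) momentum lag\<close>
  have 4: "J \<ge> a - K * cc * (P / (2 * lam) + lam * a / 2)"
  proof -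
    have "E (\<lambda>w. (norm (grad (W (Suc k) w)))^2 - K * cc * ((norm (Mo k w))^2 / (2 * lam) + lam * (norm (grad (W (Suc k) w)))^2 / 2)) \<le> J"
      unfolding J_def E_def
    proof (rule EE_mono)
      fix w
      define gv where "gv = grad (V k w)"
      define gw where "gw = grad (W (Suc k) w)"
      define m where "m = Mo k w"
      have d: "norm (gv - gw) \<le> K * (cc * norm m)"
        using grad_lip[of "V k w" "W (Suc k) w"] cc_nonneg by (simp add: gv_def gw_def m_def V_def)
      have "inner gv gw = (norm gw)^2 + inner (gv - gw) gw"
        by (simp add: inner_diff_left power2_norm_eq_inner)
      also have "\<dots> \<ge> (norm gw)^2 - norm (gv - gw) * norm gw"
        using Cauchy_Schwarz_ineq2[of "gv - gw" gw] by linarith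
      finally have e1: "inner gv gw \<ge> (norm gw)^2 - norm (gv - gw) * norm gw" .
      have "norm (gv - gw) * norm gw \<le> K * (cc * norm m) * norm gw"
        using d by (intro mult_right_mono) auto
      also have "\<dots> = K * cc * (norm m * norm gw)" by simp
      also have "\<dots> \<le> K * cc * ((norm m)^2 / (2 * lam) + lam * (norm gw)^2 / 2)"
        using amgm[OF lam_pos, of "norm m" "norm gw"] K_nonneg cc_nonneg by (intro mult_left_mono) auto
      finally show "(norm gw)^2 - K * cc * ((norm m)^2 / (2 * lam) + lam * (norm gw)^2 / 2) \<le> inner gv gw"
        using e1 by linarith
    qed
    moreover have "E (\<lambda>w. (norm (grad (W (Suc k) w)))^2 - K * cc * ((norm (Mo k w))^2 / (2 * lam) + lam * (norm (grad (W (Suc k) w)))^2 / 2))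
        = a - K * cc * (P / (2 * lam) + lam * a / 2)"
    proof -
      have "(\<lambda>w. (norm (grad (W (Suc k) w)))^2 - K * cc * ((norm (Mo k w))^2 / (2 * lam) + lam * (norm (grad (W (Suc k) w)))^2 / 2))
          = (\<lambda>w. (norm (grad (W (Suc k) w)))^2 - (K * cc / (2 * lam)) * (norm (Mo k w))^2 - (K * cc * lam / 2) * (norm (grad (W (Suc k) w)))^2)"
        by (simp add: algebra_simps)
      then show ?thesis unfolding a_def P_def E_def
        by (simp only: EE_diff EE_cmult) (simp add: algebra_simps)
    qed
    ultimately show ?thesis by simp
  qed
  have 5: "P' \<le> \<beta> * P + (1 - \<beta>) * G"
  proof -
    have "P' \<le> E (\<lambda>w. \<beta> * (norm (Mo k w))^2 + (1 - \<beta>) * (norm (gk k w))^2)"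
      unfolding P'_def E_def
    proof (rule EE_mono)
      fix w
      show "(norm (Mo (Suc k) w))^2 \<le> \<beta> * (norm (Mo k w))^2 + (1 - \<beta>) * (norm (gk k w))^2"
        using sq_convex[of \<beta> "Mo k w" "gk k w"] beta0 beta1 by (simp add: Mo_Suc)
    qed
    also have "\<dots> = \<beta> * P + (1 - \<beta>) * G"
      unfolding P_def G_def E_def EE_add EE_cmult ..
    finally show ?thesis .
  qed
  have lp: "0 < lam" by (rule lam_pos)
  have ea: "alpha * (1 - \<beta>) = \<eta> * K * cc / (2 * lam)"
    using beta1 by (simp add: alpha_def)
  have G0: "0 \<le> K / 2 * \<eta>^2 + alpha * (1 - \<beta>)"
    using K_nonneg alpha_nonneg beta1 by simp
  have s3: "(K / 2 * \<eta>^2 + alpha * (1 - \<beta>)) * G \<le> (K / 2 * \<eta>^2 + alpha * (1 - \<beta>)) * (c1 * a)"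
    using 3 G0 by (rule mult_left_mono)
  have s4: "\<eta> * J \<ge> \<eta> * (a - K * cc * (P / (2 * lam) + lam * a / 2))"
    using 4 eta0 by (intro mult_left_mono) auto
  have s5: "alpha * P' \<le> alpha * (\<beta> * P + (1 - \<beta>) * G)"
    using 5 alpha_nonneg by (rule mult_left_mono)
  have c1l: "c1 = lam * lam" using lam_sq by (simp add: power2_eq_square)
  have dd: "\<eta> * delta = \<eta> - \<eta> * K * cc * lam - K / 2 * \<eta>^2 * c1"
    using beta1 by (simp add: delta_def cc_def field_simps power2_eq_square)
  have "A' + alpha * P' \<le> A - \<eta> * J + K / 2 * \<eta>^2 * G + alpha * (\<beta> * P + (1 - \<beta>) * G)"
    using 1 s5 unfolding 2 by linarith
  also have "\<dots> = A - \<eta> * J + alpha * \<beta> * P + (K / 2 * \<eta>^2 + alpha * (1 - \<beta>)) * G"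
    by (simp add: algebra_simps)
  also have "\<dots> \<le> A - \<eta> * (a - K * cc * (P / (2 * lam) + lam * a / 2)) + alpha * \<beta> * P + (K / 2 * \<eta>^2 + alpha * (1 - \<beta>)) * (c1 * a)"
    using s3 s4 by linarith
  also have "\<dots> = A + alpha * P - \<eta> * delta * a"
  proof -
    define q where "q = \<eta> * K * cc / (2 * lam)"
    define r where "r = \<eta> * K * cc * lam"
    have T1: "\<eta> * (a - K * cc * (P / (2 * lam) + lam * a / 2)) = \<eta> * a - q * P - r * a / 2"
      using lp by (simp add: q_def r_def field_simps)
    have T2: "(K / 2 * \<eta>^2 + alpha * (1 - \<beta>)) * (c1 * a) = K / 2 * \<eta>^2 * c1 * a + r * a / 2"
      unfolding ea using lp c1l by (simp add: r_def field_simps)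
    have T3: "alpha * P = alpha * \<beta> * P + q * P"
    proof -
      have "alpha * P = alpha * \<beta> * P + alpha * (1 - \<beta>) * P" by (simp add: algebra_simps)
      then show ?thesis unfolding ea q_def .
    qed
    have T4: "\<eta> * delta * a = \<eta> * a - r * a - K / 2 * \<eta>^2 * c1 * a"
    proof -
      have "\<eta> * delta * a = (\<eta> - \<eta> * K * cc * lam - K / 2 * \<eta>^2 * c1) * a" using dd by simp
      then show ?thesis by (simp add: r_def algebra_simps)
    qed
    show ?thesis unfolding T1 T2 T4 using T3 by linarith
  qed
  finally show ?thesis unfolding A'_def P'_def A_def P_def a_def .
qed

end


context sgd begin

lemma sum_bound: "(\<Sum>k<T. EE Bs T (\<lambda>w. (norm (grad (W (Suc k) w)))^2)) \<le> L w0 / (\<eta> * delta)"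
proof -
  define E where "E = EE Bs T"
  define Phi where "Phi k = E (\<lambda>w. L (V k w)) + alpha * E (\<lambda>w. (norm (Mo k w))^2)" for k
  have "(\<Sum>k<T. \<eta> * delta * E (\<lambda>w. (norm (grad (W (Suc k) w)))^2)) \<le> Phi 0 - Phi T"
    by (rule telescope) (use step_ineq in \<open>simp add: Phi_def E_def\<close>)
  also have "Phi 0 = L w0"
    by (simp add: Phi_def E_def V_0 Mo_0 EE_const Bs_fin Bs_ne)
  also have "0 \<le> Phi T"
    unfolding Phi_def E_def using alpha_nonneg
    by (intro add_nonneg_nonneg mult_nonneg_nonneg EE_nonneg L_nonneg) auto
  then have "L w0 - Phi T \<le> L w0" by simp
  finally have "\<eta> * delta * (\<Sum>k<T. E (\<lambda>w. (norm (grad (W (Suc k) w)))^2)) \<le> L w0"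
    by (simp add: sum_distrib_left)
  moreover have "0 < \<eta> * delta" using eta0 delta_pos by simp
  ultimately show ?thesis unfolding E_def by (simp add: field_simps mult.commute)
qed

end

lemma conv:
  fixes S :: "'b set" and F :: "(nat \<Rightarrow> 'b) \<Rightarrow> real"
  assumes S: "finite S" "S \<noteq> {}" and dep: "dep T F" and nn: "\<And>w. 0 \<le> F w"
  defines "M \<equiv> PiM (UNIV::nat set) (\<lambda>_. measure_pmf (pmf_of_set S))"
  shows "\<exists>s. s \<in> borel_measurable M \<and> (AE w in M. ennreal (F w) = s w)
             \<and> integral\<^sup>N M s = ennreal (EE S T F)"
proof -
  interpret pps: product_prob_space "\<lambda>_::nat. measure_pmf (pmf_of_set S)" UNIV
    by (rule product_prob_spaceI) (rule prob_space_measure_pmf)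
  define C where "C \<rho> = {w\<in>space M. \<forall>t\<in>{1..T}. w t \<in> {\<rho> t}}" for \<rho>
  define s where "s w = (\<Sum>\<rho>\<in>Om S T. ennreal (F \<rho>) * indicator (C \<rho>) w)" for w
  have spM: "space M = UNIV" by (simp add: M_def space_PiM)
  have Cs: "C \<rho> \<in> sets M" for \<rho>
    unfolding C_def
  proof (rule sets.sets_Collect_finite_All)
    fix t :: nat
    have "(\<lambda>w. w t) \<in> measurable M (measure_pmf (pmf_of_set S))"
      unfolding M_def by (rule measurable_component_singleton) simp
    then have "(\<lambda>w. w t) -` {\<rho> t} \<inter> space M \<in> sets M"
      by (rule measurable_sets) simp
    moreover have "{w \<in> space M. w t \<in> {\<rho> t}} = (\<lambda>w. w t) -` {\<rho> t} \<inter> space M" by auto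
    ultimately show "{w \<in> space M. w t \<in> {\<rho> t}} \<in> sets M" by simp
  qed simp
  have Cm: "emeasure M (C \<rho>) = ennreal ((1 / real (card S))^T)" if "\<rho> \<in> Om S T" for \<rho>
  proof -
    have "emeasure M (C \<rho>) = (\<Prod>t\<in>{1..T}. emeasure (measure_pmf (pmf_of_set S)) {\<rho> t})"
      unfolding C_def M_def by (rule pps.emeasure_PiM_Collect) auto
    also have "\<dots> = (\<Prod>t\<in>{1..T}. ennreal (1 / real (card S)))"
    proof (rule prod.cong[OF refl])
      fix t assume "t \<in> {1..T}"
      then have "\<rho> t \<in> S" using that by (auto simp: Om_def)
      then show "emeasure (measure_pmf (pmf_of_set S)) {\<rho> t} = ennreal (1 / real (card S))"
        using S by (simp add: emeasure_pmf_single)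
    qed
    also have "\<dots> = ennreal ((1 / real (card S))^T)"
      by (simp add: ennreal_power)
    finally show ?thesis .
  qed
  have sm: "s \<in> borel_measurable M"
    unfolding s_def using Cs by measurable
  have AES: "AE w in M. \<forall>t. w t \<in> S"
  proof (subst AE_all_countable, intro allI)
    fix t
    show "AE w in M. w t \<in> S"
      unfolding M_def
      by (rule AE_PiM_component) (use S in \<open>auto simp: AE_measure_pmf_iff prob_space_measure_pmf\<close>)
  qed
  have "AE w in M. ennreal (F w) = s w"
    using AES
  proof (rule AE_mp, intro AE_I2 impI)
    fix w :: "nat \<Rightarrow> 'b" assume wS: "\<forall>t. w t \<in> S"
    define \<rho>0 where "\<rho>0 = restrict w {1..T}"
    have r0: "\<rho>0 \<in> Om S T" using wS by (auto simp: Om_def \<rho>0_def)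
    have ind: "indicator (C \<rho>) w = (if \<rho> = \<rho>0 then 1 else (0::ennreal))" if "\<rho> \<in> Om S T" for \<rho>
    proof -
      have "w \<in> C \<rho> \<longleftrightarrow> \<rho> = \<rho>0"
      proof
        assume "w \<in> C \<rho>"
        then have "\<forall>t\<in>{1..T}. w t = \<rho> t" by (auto simp: C_def)
        then show "\<rho> = \<rho>0" using that by (auto simp: Om_def \<rho>0_def PiE_def extensional_def)
      next
        assume "\<rho> = \<rho>0" then show "w \<in> C \<rho>" by (auto simp: C_def spM \<rho>0_def)
      qed
      then show ?thesis by (simp add: indicator_def)
    qed
    have "s w = (\<Sum>\<rho>\<in>Om S T. if \<rho> = \<rho>0 then ennreal (F \<rho>) else 0)"
      unfolding s_def by (rule sum.cong[OF refl]) (simp add: ind)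
    also have "\<dots> = ennreal (F \<rho>0)" using r0 S by (simp add: finite_Om)
    also have "F \<rho>0 = F w" using dep unfolding dep_def \<rho>0_def by auto
    finally show "ennreal (F w) = s w" by simp
  qed
  moreover have "integral\<^sup>N M s = ennreal (EE S T F)"
  proof -
    have "integral\<^sup>N M s = (\<Sum>\<rho>\<in>Om S T. \<integral>\<^sup>+w. ennreal (F \<rho>) * indicator (C \<rho>) w \<partial>M)"
      unfolding s_def by (rule nn_integral_sum) (use Cs in auto)
    also have "\<dots> = (\<Sum>\<rho>\<in>Om S T. ennreal (F \<rho>) * ennreal ((1 / real (card S))^T))"
      by (rule sum.cong[OF refl]) (simp add: nn_integral_cmult_indicator Cs Cm)
    also have "\<dots> = (\<Sum>\<rho>\<in>Om S T. ennreal (F \<rho> * (1 / real (card S))^T))"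
      using nn by (simp add: ennreal_mult)
    also have "\<dots> = ennreal (\<Sum>\<rho>\<in>Om S T. F \<rho> * (1 / real (card S))^T)"
      using nn by (simp add: sum_nonneg)
    also have "(\<Sum>\<rho>\<in>Om S T. F \<rho> * (1 / real (card S))^T) = EE S T F"
      using S by (simp add: EE_def card_Om sum_distrib_right[symmetric] power_one_over divide_inverse power_inverse)
    finally show ?thesis .
  qed
  ultimately show ?thesis using sm by blast
qed


lemma lim_top:
  fixes dl :: "real \<Rightarrow> real" and q :: "nat \<Rightarrow> real"
  assumes cont: "continuous_on UNIV dl" and neg: "\<And>u. dl u < 0"
    and ls: "Limsup at_bot (\<lambda>u. ereal (dl u)) < 0"
    and lim: "(\<lambda>k. dl (q k)) \<longlonglongrightarrow> 0"
  shows "filterlim q at_top sequentially"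
  unfolding filterlim_at_top
proof
  fix Z :: real
  obtain c :: real where c: "Limsup at_bot (\<lambda>u. ereal (dl u)) < ereal c" "ereal c < 0"
    using ereal_dense2[OF ls] by blast
  have "eventually (\<lambda>u. ereal (dl u) < ereal c) at_bot" by (rule Limsup_lessD[OF c(1)])
  then obtain R where R: "\<And>u. u \<le> R \<Longrightarrow> dl u < c" by (auto simp: eventually_at_bot_linorder)
  define R' where "R' = min R Z"
  have "\<exists>m\<in>{R'..Z}. \<forall>y\<in>{R'..Z}. dl y \<le> dl m"
    by (rule continuous_attains_sup) (auto simp: R'_def intro: continuous_on_subset[OF cont])
  then obtain m where m: "m \<in> {R'..Z}" "\<forall>y\<in>{R'..Z}. dl y \<le> dl m" by blast
  define e where "e = max c (dl m)"
  have e0: "e < 0" using c(2) neg[of m] by (simp add: e_def)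
  have le: "dl u \<le> e" if "u \<le> Z" for u
  proof (cases "u \<le> R'")
    case True then have "dl u < c" using R by (simp add: R'_def)
    then show ?thesis by (simp add: e_def)
  next
    case False then have "dl u \<le> dl m" using m that by auto
    then show ?thesis by (simp add: e_def)
  qed
  have "eventually (\<lambda>k. e < dl (q k)) sequentially"
    using order_tendstoD(1)[OF lim e0] .
  then show "eventually (\<lambda>k. Z \<le> q k) sequentially"
  proof (rule eventually_mono)
    fix k assume ek: "e < dl (q k)"
    show "Z \<le> q k"
    proof (rule ccontr)
      assume "\<not> Z \<le> q k"
      then have "dl (q k) \<le> e" using le by simp
      then show False using ek by simp
    qed
  qed
qed

context data begin

lemma margins_to_top:
  fixes q :: "nat \<Rightarrow> 'a"
  assumes ls: "Limsup at_bot (\<lambda>u. ereal (dl u)) < 0"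
    and sm: "summable (\<lambda>k. (norm (grad (q k)))^2)"
    and i: "i < N"
  shows "filterlim (\<lambda>k. inner (q k) (x i)) at_top sequentially"
proof (rule lim_top[of dl])
  show "continuous_on UNIV dl"
    by (rule lipschitz_on_continuous_on[of H]) (use lip H_nonneg in \<open>auto intro!: lipschitz_onI simp: dist_real_def\<close>)
  show "\<And>u. dl u < 0" by (rule neg)
  show "Limsup at_bot (\<lambda>u. ereal (dl u)) < 0" by (rule ls)
  have "(\<lambda>k. (norm (grad (q k)))^2) \<longlonglongrightarrow> 0" by (rule summable_LIMSEQ_zero[OF sm])
  then have "(\<lambda>k. sqrt ((norm (grad (q k)))^2)) \<longlonglongrightarrow> sqrt 0" by (rule tendsto_real_sqrt)
  then have g0: "(\<lambda>k. norm (grad (q k))) \<longlonglongrightarrow> 0" by simp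
  have "(\<lambda>k. real N * norm wh * norm (grad (q k))) \<longlonglongrightarrow> real N * norm wh * 0"
    by (intro tendsto_mult tendsto_const g0)
  then have up: "(\<lambda>k. real N * norm wh * norm (grad (q k))) \<longlonglongrightarrow> 0" by simp
  have "(\<lambda>k. - dl (inner (q k) (x i))) \<longlonglongrightarrow> 0"
  proof (rule tendsto_sandwich[OF _ _ tendsto_const up])
    show "\<forall>\<^sub>F k in sequentially. 0 \<le> - dl (inner (q k) (x i))" using neg by (simp add: less_imp_le)
    show "\<forall>\<^sub>F k in sequentially. - dl (inner (q k) (x i)) \<le> real N * norm wh * norm (grad (q k))"
    proof (intro always_eventually allI)
      fix k
      have "- dl (inner (q k) (x i)) \<le> (\<Sum>j<N. - dl (inner (q k) (x j)))"
        by (rule member_le_sum) (use i neg in \<open>auto simp: less_imp_le\<close>)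
      also have "\<dots> \<le> real N * norm wh * norm (grad (q k))" by (rule gsum)
      finally show "- dl (inner (q k) (x i)) \<le> real N * norm wh * norm (grad (q k))" .
    qed
  qed
  then have "(\<lambda>k. - (- dl (inner (q k) (x i)))) \<longlonglongrightarrow> - 0" by (rule tendsto_minus)
  then show "(\<lambda>k. dl (inner (q k) (x i))) \<longlonglongrightarrow> 0" by simp
qed

end

lemma max_margin_prop:
  fixes x :: "nat \<Rightarrow> 'a::euclidean_space"
  assumes A1: "\<exists>w. \<forall>i<N. inner w (x i) > 0"
  shows "\<forall>i<N. 1 \<le> inner (max_margin N x) (x i)"
proof -
  define S where "S = {w. \<forall>i<N. 1 \<le> inner w (x i)}"
  have S_eq: "S = (\<Inter>i\<in>{..<N}. {w. 1 \<le> inner (x i) w})" by (auto simp: S_def inner_commute)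
  have cl: "closed S" unfolding S_eq by (intro closed_INT) (simp add: closed_halfspace_ge)
  have cv: "convex S" unfolding S_eq by (intro convex_INT) (simp add: convex_halfspace_ge)
  have ne: "S \<noteq> {}"
  proof (cases "N = 0")
    case True then show ?thesis by (auto simp: S_def)
  next
    case False
    obtain w where w: "\<forall>i<N. inner w (x i) > 0" using A1 by blast
    define mu where "mu = Min ((\<lambda>i. inner w (x i)) ` {..<N})"
    have mu_in: "mu \<in> (\<lambda>i. inner w (x i)) ` {..<N}" unfolding mu_def using False by (intro Min_in) auto
    then have mu0: "0 < mu" using w by auto
    have "(1 / mu) *\<^sub>R w \<in> S"
    proof -
      have "1 \<le> inner w (x i) / mu" if "i < N" for i
      proof -
        have "mu \<le> inner w (x i)" unfolding mu_def using that by (intro Min_le) auto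
        then show ?thesis using mu0 by simp
      qed
      then show ?thesis by (simp add: S_def)
    qed
    then show ?thesis by blast
  qed
  define p where "p = closest_point S 0"
  have pS: "p \<in> S" unfolding p_def by (rule closest_point_exists(1)[OF cl ne])
  have pmin: "\<forall>y\<in>S. dist 0 p \<le> dist 0 y" unfolding p_def by (rule closest_point_exists(2)[OF cl ne])
  have pprop: "(\<forall>i<N. inner p (x i) \<ge> 1) \<and> (\<forall>v. (\<forall>i<N. inner v (x i) \<ge> 1) \<longrightarrow> (norm p)\<^sup>2 \<le> (norm v)\<^sup>2)"
  proof
    show "\<forall>i<N. inner p (x i) \<ge> 1" using pS by (simp add: S_def)
    show "\<forall>v. (\<forall>i<N. inner v (x i) \<ge> 1) \<longrightarrow> (norm p)\<^sup>2 \<le> (norm v)\<^sup>2"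
    proof (intro allI impI)
      fix v assume "\<forall>i<N. inner v (x i) \<ge> 1"
      then have "v \<in> S" by (simp add: S_def)
      then have "norm p \<le> norm v" using pmin by auto
      then show "(norm p)\<^sup>2 \<le> (norm v)\<^sup>2" by (intro power_mono) auto
    qed
  qed
  have "max_margin N x = p"
    unfolding max_margin_def
  proof (rule the_equality)
    show "(\<forall>i<N. inner p (x i) \<ge> 1) \<and> (\<forall>v. (\<forall>i<N. inner v (x i) \<ge> 1) \<longrightarrow> (norm p)\<^sup>2 \<le> (norm v)\<^sup>2)"
      by (rule pprop)
  next
    fix w assume w: "(\<forall>i<N. inner w (x i) \<ge> 1) \<and> (\<forall>v. (\<forall>i<N. inner v (x i) \<ge> 1) \<longrightarrow> (norm w)\<^sup>2 \<le> (norm v)\<^sup>2)"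
    have wS: "w \<in> S" using w by (simp add: S_def)
    have "\<forall>z\<in>S. dist 0 w \<le> dist 0 z"
    proof
      fix z assume "z \<in> S"
      then have "(norm w)\<^sup>2 \<le> (norm z)\<^sup>2" using w by (simp add: S_def)
      then have "norm w \<le> norm z" by (rule power2_le_imp_le) simp
      then show "dist 0 w \<le> dist 0 z" by simp
    qed
    then show "w = p" unfolding p_def by (rule closest_point_unique[OF cv cl wS])
  qed
  then show ?thesis using pS by (simp add: S_def)
qed

lemma sigma_max_prop:
  fixes x :: "nat \<Rightarrow> 'a::euclidean_space"
  shows "norm (\<Sum>i<N. a i *\<^sub>R x i) \<le> sigma_max N x * sqrt (\<Sum>i<N. (a i)^2)"
proof -
  define Q where "Q = {norm (\<Sum>i<N. v i *\<^sub>R x i) | v. (\<Sum>i<N. (v i)\<^sup>2) \<le> 1}"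
  have bdd: "bdd_above Q"
  proof (rule bdd_aboveI)
    fix q assume "q \<in> Q"
    then obtain v where v: "q = norm (\<Sum>i<N. v i *\<^sub>R x i)" "(\<Sum>i<N. (v i)\<^sup>2) \<le> 1" by (auto simp: Q_def)
    have "q \<le> (\<Sum>i<N. norm (v i *\<^sub>R x i))" unfolding v(1) by (rule norm_sum)
    also have "\<dots> \<le> (\<Sum>i<N. norm (x i))"
    proof (rule sum_mono)
      fix i assume i: "i \<in> {..<N}"
      have "(v i)\<^sup>2 \<le> (\<Sum>j<N. (v j)\<^sup>2)" by (rule member_le_sum) (use i in auto)
      then have "(v i)\<^sup>2 \<le> 1" using v(2) by simp
      then have "\<bar>v i\<bar> \<le> 1" by (simp add: abs_square_le_1)
      then show "norm (v i *\<^sub>R x i) \<le> norm (x i)" by (simp add: mult_left_le_one_le)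
    qed
    finally show "q \<le> (\<Sum>i<N. norm (x i))" .
  qed
  define s where "s = (\<Sum>i<N. (a i)^2)"
  have s0: "0 \<le> s" by (simp add: s_def sum_nonneg)
  show ?thesis
  proof (cases "s = 0")
    case True
    then have "\<forall>i\<in>{..<N}. (a i)^2 = 0" unfolding s_def by (subst (asm) sum_nonneg_eq_0_iff) auto
    then have "(\<Sum>i<N. a i *\<^sub>R x i) = 0" by simp
    moreover have q0: "0 \<in> Q" unfolding Q_def by (rule CollectI, rule exI[of _ "\<lambda>_. 0"]) simp
    have "0 \<le> sigma_max N x" unfolding sigma_max_def Q_def[symmetric] using cSup_upper2[of 0 Q 0] q0 bdd by simp
    ultimately show ?thesis by (simp add: s_def[symmetric] True)
  next
    case False
    then have sp: "0 < sqrt s" using s0 by simp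
    define v where "v i = a i / sqrt s" for i
    have "(\<Sum>i<N. (v i)\<^sup>2) = (\<Sum>i<N. (a i)\<^sup>2) / s" using s0 by (simp add: v_def power_divide sum_divide_distrib[symmetric])
    then have "(\<Sum>i<N. (v i)\<^sup>2) = s / s" by (simp add: s_def)
    then have "(\<Sum>i<N. (v i)\<^sup>2) \<le> 1" using False by simp
    then have "norm (\<Sum>i<N. v i *\<^sub>R x i) \<in> Q" unfolding Q_def by blast
    then have "norm (\<Sum>i<N. v i *\<^sub>R x i) \<le> sigma_max N x" unfolding sigma_max_def Q_def[symmetric] using bdd by (rule cSup_upper)
    moreover have "(\<Sum>i<N. a i *\<^sub>R x i) = sqrt s *\<^sub>R (\<Sum>i<N. v i *\<^sub>R x i)"
      using sp by (simp add: v_def scaleR_sum_right)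
    ultimately have "norm (\<Sum>i<N. a i *\<^sub>R x i) \<le> sqrt s * sigma_max N x"
      using sp by (simp add: mult_left_mono)
    then show ?thesis by (simp add: s_def mult.commute)
  qed
qed


lemma step_alg:
  fixes H \<beta> \<sigma> n :: real and N b :: nat
  assumes "0 < \<sigma>" "0 < n" "1 \<le> N" "1 \<le> b" "\<beta> < 1"
  shows "H * \<beta> * \<sigma> ^ 3 / (sqrt (real N * real b) * (1 / n) * (1 - \<beta>)) + H * \<sigma> ^ 4 / (2 * real b * (1 / n)\<^sup>2)
       = (H * \<sigma>^2 / real N) * \<beta> * sqrt (\<sigma>^2 * real N * n^2 / real b) / (1 - \<beta>) + (H * \<sigma>^2 / real N) * (\<sigma>^2 * real N * n^2 / real b) / 2"
proof -
  have sc: "sqrt (\<sigma>^2 * real N * n^2 / real b) = \<sigma> * n * sqrt (real N) / sqrt (real b)"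
    using assms by (simp add: real_sqrt_mult real_sqrt_divide)
  have sN2: "sqrt (real N) * (sqrt (real N) * y) = real N * y" for y by (simp add: mult.assoc[symmetric])
  have p1: "0 < sqrt (real N)" "0 < sqrt (real b)" using assms by auto
  have "(H * \<sigma>^2 / real N) * \<beta> * (\<sigma> * n * sqrt (real N) / sqrt (real b)) / (1 - \<beta>)
      = H * \<beta> * \<sigma> ^ 3 / (sqrt (real N * real b) * (1 / n) * (1 - \<beta>))"
    using assms p1 by (simp add: real_sqrt_mult field_simps power3_eq_cube power2_eq_square) (simp add: sN2 algebra_simps)
  moreover have "(H * \<sigma>^2 / real N) * (\<sigma>^2 * real N * n^2 / real b) / 2 = H * \<sigma> ^ 4 / (2 * real b * (1 / n)\<^sup>2)"
    using assms by (simp add: field_simps power2_eq_square power4_eq_xxxx)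
  ultimately show ?thesis unfolding sc by simp
qed

theorem mainTheorem13:
  fixes x :: "nat \<Rightarrow> 'a::euclidean_space"
    and N b :: nat
    and l dl :: "real \<Rightarrow> real"
    and H \<beta> \<eta> :: real
    and w0 :: 'a
  assumes N: "N \<ge> 1" and b: "1 \<le> b" "b \<le> N"
    and A1: "\<exists>w. \<forall>i<N. inner w (x i) > 0"
    and A2_deriv: "\<And>u. (l has_real_derivative dl u) (at u)"
    and A2_neg: "\<And>u. dl u < 0"
    and A2_lim: "(l \<longlongrightarrow> 0) at_top" "(dl \<longlongrightarrow> 0) at_top"
    and A2_limsup: "Limsup at_bot (\<lambda>u. ereal (dl u)) < 0"
    and A2_tail: "\<exists>\<mu>p xp \<mu>m xm. \<mu>p > 0 \<and> xp > 0 \<and> \<mu>m > 0 \<and> xm > 0 \<and>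
        (\<forall>u>xp. - dl u \<le> (1 + exp (- \<mu>p * u)) * exp (- u)) \<and>
        (\<forall>u>xm. - dl u \<ge> (1 - exp (- \<mu>m * u)) * exp (- u))"
    and A3: "\<And>u v. \<bar>dl u - dl v\<bar> \<le> H * \<bar>u - v\<bar>"
    and beta: "0 \<le> \<beta>" "\<beta> < 1"
    and eta: "0 < \<eta>"
      "\<eta> < inverse (H * \<beta> * (sigma_max N x) ^ 3 / (sqrt (real N * real b) * margin N x * (1 - \<beta>))
                     + H * (sigma_max N x) ^ 4 / (2 * real b * (margin N x)\<^sup>2))"
  shows "(\<Sum>t. \<integral>\<^sup>+ \<omega>. ennreal ((norm (full_grad dl N x (sgdm_w dl b x \<beta> \<eta> w0 \<omega> (Suc t))))\<^sup>2)
            \<partial>batch_space N b) < \<infinity>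
     \<and> (AE \<omega> in batch_space N b.
          summable (\<lambda>t. (norm (full_grad dl N x (sgdm_w dl b x \<beta> \<eta> w0 \<omega> (Suc t))))\<^sup>2)
          \<and> (\<forall>i<N. filterlim (\<lambda>t. inner (sgdm_w dl b x \<beta> \<eta> w0 \<omega> t) (x i)) at_top sequentially))"
proof -
  define wh where "wh = max_margin N x"
  define \<sigma> where "\<sigma> = sigma_max N x"
  have whp: "\<And>i. i < N \<Longrightarrow> 1 \<le> inner wh (x i)" using max_margin_prop[OF A1] by (simp add: wh_def)
  interpret D: data x N b l dl H \<sigma> wh
  proof
    show "1 \<le> N" by (rule N)
    show "1 \<le> b" "b \<le> N" by (rule b(1), rule b(2))
    show "\<And>u. (l has_real_derivative dl u) (at u)" by (rule A2_deriv)
    show "\<And>u. dl u < 0" by (rule A2_neg)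
    show "(l \<longlongrightarrow> 0) at_top" by (rule A2_lim(1))
    show "\<And>u v. \<bar>dl u - dl v\<bar> \<le> H * \<bar>u - v\<bar>" by (rule A3)
    show "\<And>i. i < N \<Longrightarrow> 1 \<le> inner wh (x i)" by (rule whp)
    show "\<And>a. norm (\<Sum>i<N. a i *\<^sub>R x i) \<le> \<sigma> * sqrt (\<Sum>i<N. (a i)^2)"
      unfolding \<sigma>_def by (rule sigma_max_prop)
  qed
  have whn: "0 < norm wh" using whp[of 0] N by auto
  have mg: "margin N x = 1 / norm wh" by (simp add: margin_def wh_def)
  have Xeq: "H * \<beta> * (sigma_max N x) ^ 3 / (sqrt (real N * real b) * margin N x * (1 - \<beta>))
                     + H * (sigma_max N x) ^ 4 / (2 * real b * (margin N x)\<^sup>2)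
        = D.K * \<beta> * sqrt D.c1 / (1 - \<beta>) + D.K * D.c1 / 2"
    unfolding mg \<sigma>_def[symmetric] D.K_def D.c1_def
    by (rule step_alg[OF D.sigma_pos whn N b(1) beta(2)])
  have stp: "\<eta> * (D.K * \<beta> * sqrt D.c1 / (1 - \<beta>) + D.K * D.c1 / 2) < 1"
  proof (cases "0 < D.K * \<beta> * sqrt D.c1 / (1 - \<beta>) + D.K * D.c1 / 2")
    case True
    then show ?thesis using eta(2) unfolding Xeq by (simp add: field_simps)
  next
    case False
    then have "\<eta> * (D.K * \<beta> * sqrt D.c1 / (1 - \<beta>) + D.K * D.c1 / 2) \<le> 0"
      using eta(1) by (simp add: mult_nonneg_nonpos)
    then show ?thesis by simp
  qed
  interpret S: sgd x N b l dl H \<sigma> wh \<beta> \<eta> w0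
    by unfold_locales (use beta eta stp in auto)
  define M where "M = batch_space N b"
  have M_eq: "M = PiM (UNIV::nat set) (\<lambda>_. measure_pmf (pmf_of_set (batches N b)))"
    by (simp add: M_def batch_space_def)
  define f where "f k w = (norm (D.grad (S.W (Suc k) w)))^2" for k w
  have f_eq: "f k w = (norm (full_grad dl N x (sgdm_w dl b x \<beta> \<eta> w0 w (Suc k))))\<^sup>2" for k w
    by (simp add: f_def S.W_def)
  have f_nn: "0 \<le> f k w" for k w by (simp add: f_def)
  have dep_f: "dep k (f k)" for k
    unfolding dep_def
  proof (intro allI impI)
    fix w v :: "nat \<Rightarrow> nat set" assume a: "\<forall>s\<in>{1..k}. w s = v s"
    have "S.W (Suc k) w = S.W (Suc k) v" using S.dep_W[of k] a unfolding dep_def by blast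
    then show "f k w = f k v" by (simp add: f_def)
  qed
  have cv: "\<exists>s. s \<in> borel_measurable M \<and> (AE w in M. ennreal (f k w) = s w)
             \<and> integral\<^sup>N M s = ennreal (EE (batches N b) T (f k))" if "k \<le> T" for k T
    unfolding M_eq by (rule conv[OF S.Bs_fin S.Bs_ne dep_mono[OF dep_f that] f_nn])
  have int_f: "(\<integral>\<^sup>+w. ennreal (f k w) \<partial>M) = ennreal (EE (batches N b) T (f k))" if kT: "k \<le> T" for k T
  proof -
    obtain s where s: "s \<in> borel_measurable M" "AE w in M. ennreal (f k w) = s w"
        "integral\<^sup>N M s = ennreal (EE (batches N b) T (f k))" using cv[OF kT] by blast
    have "(\<integral>\<^sup>+w. ennreal (f k w) \<partial>M) = integral\<^sup>N M s" by (rule nn_integral_cong_AE[OF s(2)])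
    then show ?thesis using s(3) by simp
  qed
  define Cb where "Cb = D.L w0 / (\<eta> * S.delta)"
  have partial: "(\<Sum>k<T. \<integral>\<^sup>+w. ennreal (f k w) \<partial>M) \<le> ennreal Cb" for T
  proof -
    have "(\<Sum>k<T. \<integral>\<^sup>+w. ennreal (f k w) \<partial>M) = (\<Sum>k<T. ennreal (EE (batches N b) T (f k)))"
      by (rule sum.cong[OF refl]) (simp add: int_f)
    also have "\<dots> = ennreal (\<Sum>k<T. EE (batches N b) T (f k))"
      by (rule sum_ennreal) (simp add: EE_nonneg f_nn)
    also have "\<dots> \<le> ennreal Cb"
    proof -
      have fk: "f k = (\<lambda>w. (norm (D.grad (S.W (Suc k) w)))^2)" for k by (simp add: f_def fun_eq_iff)
      show ?thesis using S.sum_bound[of T] by (intro ennreal_leI) (simp add: Cb_def fk)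
    qed
    finally show ?thesis .
  qed
  have total: "(\<Sum>k. \<integral>\<^sup>+w. ennreal (f k w) \<partial>M) \<le> ennreal Cb"
    by (rule suminf_le_const[OF summableI partial])
  have fin: "(\<Sum>k. \<integral>\<^sup>+w. ennreal (f k w) \<partial>M) < \<infinity>"
    using le_less_trans[OF total ennreal_less_top] by simp
  have "\<forall>k. \<exists>s. s \<in> borel_measurable M \<and> (AE w in M. ennreal (f k w) = s w)"
    using cv by blast
  then have "\<exists>s. \<forall>k. s k \<in> borel_measurable M \<and> (AE w in M. ennreal (f k w) = s k w)"
    by (rule choice)
  then obtain s where s0: "\<forall>k. s k \<in> borel_measurable M \<and> (AE w in M. ennreal (f k w) = s k w)"
    by blast
  then have s: "\<And>k. s k \<in> borel_measurable M" "\<And>k. AE w in M. ennreal (f k w) = s k w"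
    by auto
  have sAE: "AE w in M. \<forall>k. ennreal (f k w) = s k w"
    using s(2) by (simp add: AE_all_countable)
  have si: "integral\<^sup>N M (s k) = (\<integral>\<^sup>+w. ennreal (f k w) \<partial>M)" for k
    by (rule nn_integral_cong_AE[OF s(2), symmetric])
  have "(\<integral>\<^sup>+w. (\<Sum>k. s k w) \<partial>M) = (\<Sum>k. integral\<^sup>N M (s k))"
    by (rule nn_integral_suminf[OF s(1)])
  also have "\<dots> = (\<Sum>k. \<integral>\<^sup>+w. ennreal (f k w) \<partial>M)" by (simp add: si)
  finally have "(\<integral>\<^sup>+w. (\<Sum>k. s k w) \<partial>M) \<noteq> \<infinity>" using fin by simp
  moreover have "(\<lambda>w. \<Sum>k. s k w) \<in> borel_measurable M"
    using s(1) by measurable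
  ultimately have "AE w in M. (\<Sum>k. s k w) \<noteq> \<infinity>"
    using nn_integral_PInf_AE by blast
  with sAE have AEs: "AE w in M. summable (\<lambda>k. f k w)"
  proof (rule AE_mp[OF AE_conjI[OF _ _]], intro AE_I2 impI)
    fix w assume "(\<forall>k. ennreal (f k w) = s k w) \<and> (\<Sum>k. s k w) \<noteq> \<infinity>"
    then have "(\<Sum>k. ennreal (f k w)) \<noteq> top" by simp
    then show "summable (\<lambda>k. f k w)" by (rule summable_suminf_not_top[OF f_nn])
  qed
  have lims: "AE w in M. summable (\<lambda>k. f k w) \<and> (\<forall>i<N. filterlim (\<lambda>t. inner (sgdm_w dl b x \<beta> \<eta> w0 w t) (x i)) at_top sequentially)"
    using AEs
  proof (rule AE_mp, intro AE_I2 impI conjI allI)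
    fix w i assume sm: "summable (\<lambda>k. f k w)"
    then show "summable (\<lambda>k. f k w)" .
    assume i: "i < N"
    have "filterlim (\<lambda>k. inner (S.W (Suc k) w) (x i)) at_top sequentially"
      by (rule D.margins_to_top[OF A2_limsup _ i]) (use sm in \<open>simp add: f_def\<close>)
    then have "filterlim (\<lambda>k. inner (sgdm_w dl b x \<beta> \<eta> w0 w (Suc k)) (x i)) at_top sequentially"
      by (simp add: S.W_def)
    then show "filterlim (\<lambda>t. inner (sgdm_w dl b x \<beta> \<eta> w0 w t) (x i)) at_top sequentially"
      by (rule filterlim_sequentially_Suc[THEN iffD1])
  qed
  show ?thesis
  proof (rule conjI)
    show "(\<Sum>t. \<integral>\<^sup>+ w. ennreal ((norm (full_grad dl N x (sgdm_w dl b x \<beta> \<eta> w0 w (Suc t))))\<^sup>2) \<partial>batch_space N b) < \<infinity>"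
      using fin unfolding M_def f_eq .
    show "AE w in batch_space N b.
          summable (\<lambda>t. (norm (full_grad dl N x (sgdm_w dl b x \<beta> \<eta> w0 w (Suc t))))\<^sup>2)
          \<and> (\<forall>i<N. filterlim (\<lambda>t. inner (sgdm_w dl b x \<beta> \<eta> w0 w t) (x i)) at_top sequentially)"
      using lims unfolding M_def f_eq .
  qed
qed


end
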